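(* Let $\pi_1,\pi_2,\pi_3$ be patterns such that $(\pi_1,\pi_2)$ and $(\pi_2,\pi_3)$ are chainable. Then (1) $(\pi_1,\pi_2*\pi_3)$ and $(\pi_1*\pi_2,\pi_3)$ are chainable; (2) $r(\pi_1,\pi_2*\pi_3)=r(\pi_1,\pi_2)$ and $r(\pi_1*\pi_2,\pi_3)=r(\pi_2,\pi_3)$; (3) $\pi_1*(\pi_2*\pi_3)=(\pi_1*\pi_2)*\pi_3$.
   Context: A pattern is a tuple $\pi=(a,b,c,d)$ of positive integers. Two patterns $\pi=(a,b,c,d)$, $\pi'=(a',b',c',d')$ are chainable if $ac/a'=b'd'/d$, this common value (denoted $r(\pi,\pi')$) is an integer, $a\mid a'$ and $d'\mid d$. For a chainable pair, $\pi*\pi':=(a,\,bd/d',\,a'c'/a,\,d')$. *)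

theory Defs
  imports Main "HOL.Rat"
begin

type_synonym pattern = "nat \<times> nat \<times> nat \<times> nat"

definition is_pattern :: "pattern \<Rightarrow> bool" where
  "is_pattern p = (case p of (a, b, c, d) \<Rightarrow> a > 0 \<and> b > 0 \<and> c > 0 \<and> d > 0)"

definition ratio :: "pattern \<Rightarrow> pattern \<Rightarrow> rat" where
  "ratio p q = (case p of (a, b, c, d) \<Rightarrow> case q of (a', b', c', d') \<Rightarrow>
      of_nat (a * c) / of_nat a')"

definition chainable :: "pattern \<Rightarrow> pattern \<Rightarrow> bool" where
  "chainable p q = (case p of (a, b, c, d) \<Rightarrow> case q of (a', b', c', d') \<Rightarrow>
      of_nat (a * c) / of_nat a' = (of_nat (b' * d') / of_nat d :: rat)
      \<and> of_nat (a * c) / of_nat a' \<in> (\<int> :: rat set)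
      \<and> a dvd a' \<and> d' dvd d)"

text \<open>pi * pi' = (a, b d / d', a' c' / a, d'); the divisions are exact for chainable pairs.\<close>
definition pstar :: "pattern \<Rightarrow> pattern \<Rightarrow> pattern" where
  "pstar p q = (case p of (a, b, c, d) \<Rightarrow> case q of (a', b', c', d') \<Rightarrow>
      (a, b * d div d', a' * c' div a, d'))"

end

theory Submission
  imports Defs
begin

theorem lemma4p7:
  fixes p1 p2 p3 :: pattern
  assumes "is_pattern p1" and "is_pattern p2" and "is_pattern p3"
    and "chainable p1 p2" and "chainable p2 p3"
  shows "chainable p1 (pstar p2 p3) \<and> chainable (pstar p1 p2) p3
    \<and> ratio p1 (pstar p2 p3) = ratio p1 p2 \<and> ratio (pstar p1 p2) p3 = ratio p2 p3
    \<and> pstar p1 (pstar p2 p3) = pstar (pstar p1 p2) p3"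
proof -
  obtain a1 b1 c1 d1 where P1: "p1 = (a1,b1,c1,d1)" by (cases p1) auto
  obtain a2 b2 c2 d2 where P2: "p2 = (a2,b2,c2,d2)" by (cases p2) auto
  obtain a3 b3 c3 d3 where P3: "p3 = (a3,b3,c3,d3)" by (cases p3) auto
  have pos: "a1>0" "b1>0" "c1>0" "d1>0" "a2>0" "b2>0" "c2>0" "d2>0" "a3>0" "b3>0" "c3>0" "d3>0"
    using assms(1-3) by (auto simp: is_pattern_def P1 P2 P3)
  have C1: "of_nat (a1 * c1) / of_nat a2 = (of_nat (b2 * d2) / of_nat d1 :: rat)"
    "of_nat (a1 * c1) / of_nat a2 \<in> (\<int> :: rat set)" "a1 dvd a2" "d2 dvd d1"
    using assms(4) by (auto simp: chainable_def P1 P2)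
  have C2: "of_nat (a2 * c2) / of_nat a3 = (of_nat (b3 * d3) / of_nat d2 :: rat)"
    "of_nat (a2 * c2) / of_nat a3 \<in> (\<int> :: rat set)" "a2 dvd a3" "d3 dvd d2"
    using assms(5) by (auto simp: chainable_def P2 P3)
  obtain x where x: "a2 = a1*x" using C1 by blast
  obtain u where u: "d1 = d2*u" using C1 by blast
  obtain y where y: "a3 = a2*y" using C2 by blast
  obtain v where v: "d2 = d3*v" using C2 by blast
  have e1: "b2 * d2 div d3 = b2*v" using pos v by simp
  have e2: "a3 * c3 div a2 = y*c3" using pos y by simp
  have e3: "b1 * d1 div d2 = b1*u" using pos u by simp
  have e4: "a2 * c2 div a1 = x*c2" using pos x by simp
  have e5: "a2 * (y*c3) div a1 = x*y*c3" using pos x by (simp add: mult.assoc)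
  have e6: "b1 * d1 div d3 = b1*u*v" using pos u v by (simp add: mult.assoc)
  have e7: "a3 * c3 div a1 = x*y*c3" using pos x y by (simp add: mult.assoc)
  have e8: "b1 * u * d2 div d3 = b1*u*v" using pos v by (simp add: mult.assoc)
  have S23: "pstar p2 p3 = (a2, b2*v, y*c3, d3)" by (simp add: pstar_def P2 P3 e1 e2)
  have S12: "pstar p1 p2 = (a1, b1*u, x*c2, d2)" by (simp add: pstar_def P1 P2 e3 e4)
  have n1: "b2*v*d3 = b2*d2" using v by (simp add: mult_ac)
  have n2: "a1*(x*c2) = a2*c2" using x by (simp add: mult_ac)
  have "d3 dvd d1" using C1 C2 by (meson dvd_trans)
  moreover have "a1 dvd a3" using C1 C2 by (meson dvd_trans)
  ultimately have A: "chainable p1 (pstar p2 p3)" and B: "chainable (pstar p1 p2) p3"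
    using C1 C2 unfolding S23 S12 unfolding P1 P3 chainable_def split n1 n2 by simp_all
  have R1: "ratio p1 (pstar p2 p3) = ratio p1 p2" unfolding S23 unfolding P1 P2 ratio_def by simp
  have R2: "ratio (pstar p1 p2) p3 = ratio p2 p3" unfolding S12 unfolding P2 P3 ratio_def using x by (simp add: mult_ac)
  have E: "pstar p1 (pstar p2 p3) = pstar (pstar p1 p2) p3"
    unfolding S23 S12 unfolding P1 P3 pstar_def using e5 e6 e7 e8 by simp
  show ?thesis using A B R1 R2 E by blast
qed

end
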